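(* Let $N\ge 2$, let $\rho$ be a density matrix on $\mathbb{C}^N$ and let $n\ge 1$ be an integer. Then $\mathcal{C}(\rho^{\otimes n})\le n\,\mathcal{C}(\rho)$, where $\mathcal{C}(\rho^{\otimes n})$ is computed on the $N^n$-dimensional space $(\mathbb{C}^N)^{\otimes n}$ (so with reference state $\mathbb{I}/N^n=\mathcal{I}^{\otimes n}$ and normalization $1/\log_2(N^n)$).
   Context: For a density matrix $\rho$ (positive semidefinite, trace one) on an $N$-dimensional Hilbert space $\mathcal{H}_N$, $N\ge 2$, let $\mathcal{I}=\mathbb{I}/N$ denote the normalized maximally mixed state. The von Neumann entropy is $S(\rho)=-\mathrm{Tr}[\rho\log_2\rho]$ (with $0\log 0=0$), and the trace distance to $\mathcal{I}$ is $D(\rho,\mathcal{I})=\tfrac12\mathrm{Tr}\sqrt{(\rho-\mathcal{I})^2}=\tfrac12\|\rho-\mathcal{I}\|_1$. The Quantum Statistical Complexity Measure (QSCM) is $\mathcal{C}(\rho)=\frac{1}{\log_2 N}\,S(\rho)\,D(\rho,\mathcal{I})$, where $N$ is the dimension of the space on which $\rho$ acts. *)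

theory Defs
  imports "Jordan_Normal_Form.Char_Poly" "HOL-Computational_Algebra.Polynomial" "HOL-Library.Multiset"
begin

definition kron_mat :: "complex mat \<Rightarrow> complex mat \<Rightarrow> complex mat" where
  "kron_mat A B = mat (dim_row A * dim_row B) (dim_col A * dim_col B)
     (\<lambda>(i,j). A $$ (i div dim_row B, j div dim_col B) * B $$ (i mod dim_row B, j mod dim_col B))"

fun tensor_pow :: "complex mat \<Rightarrow> nat \<Rightarrow> complex mat" where
  "tensor_pow A 0 = 1\<^sub>m 1"
| "tensor_pow A (Suc n) = kron_mat (tensor_pow A n) A"

(* density matrix on C^N: N x N, positive semidefinite (<v, rho v> real and >= 0 for all v), trace one *)
definition density_matrix :: "nat \<Rightarrow> complex mat \<Rightarrow> bool" where
  "density_matrix N \<rho> \<longleftrightarrow> \<rho> \<in> carrier_mat N N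
     \<and> (\<forall>v \<in> carrier_vec N.
          (let q = (\<Sum>i<N. \<Sum>j<N. cnj (v $ i) * \<rho> $$ (i,j) * v $ j) in Im q = 0 \<and> Re q \<ge> 0))
     \<and> (\<Sum>i<N. \<rho> $$ (i,i)) = 1"

definition eigvals_mset :: "complex mat \<Rightarrow> complex multiset" where
  "eigvals_mset A = proots (char_poly A)"

definition entr :: "real \<Rightarrow> real" where
  "entr x = (if x = 0 then 0 else x * log 2 x)"

(* von Neumann entropy  S(rho) = - Tr[rho log2 rho] = - sum over eigenvalues of  l log2 l *)
definition vn_entropy :: "complex mat \<Rightarrow> real" where
  "vn_entropy \<rho> = - (\<Sum>\<^sub># (image_mset (\<lambda>l. entr (Re l)) (eigvals_mset \<rho>)))"

(* trace distance  (1/2) Tr sqrt((A-B)^2) = (1/2) sum of |eigenvalues| of the Hermitian A - B *)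
definition trace_dist :: "complex mat \<Rightarrow> complex mat \<Rightarrow> real" where
  "trace_dist A B = (1/2) * (\<Sum>\<^sub># (image_mset (\<lambda>l. \<bar>Re l\<bar>) (eigvals_mset (A - B))))"

definition max_mixed :: "nat \<Rightarrow> complex mat" where
  "max_mixed N = (1 / of_nat N) \<cdot>\<^sub>m 1\<^sub>m N"

definition qscm :: "complex mat \<Rightarrow> real" where
  "qscm \<rho> = (1 / log 2 (real (dim_row \<rho>))) * vn_entropy \<rho>
              * trace_dist \<rho> (max_mixed (dim_row \<rho>))"

end

theory Submission imports Defs "Jordan_Normal_Form.Schur_Decomposition" begin

lemma kron_carrier[simp]: "kron_mat A B \<in> carrier_mat (dim_row A * dim_row B) (dim_col A * dim_col B)"
  by (simp add: kron_mat_def)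

lemma kron_dims[simp]: "dim_row (kron_mat A B) = dim_row A * dim_row B"
  "dim_col (kron_mat A B) = dim_col A * dim_col B"
  by (simp_all add: kron_mat_def)

lemma kron_index: "i < dim_row A * dim_row B \<Longrightarrow> j < dim_col A * dim_col B \<Longrightarrow>
  kron_mat A B $$ (i,j) = A $$ (i div dim_row B, j div dim_col B) * B $$ (i mod dim_row B, j mod dim_col B)"
  by (simp add: kron_mat_def)

lemma sum_group_nat: fixes g :: "nat \<Rightarrow> 'a::comm_monoid_add" shows "(\<Sum>r<k*l. g r) = (\<Sum>p<k. \<Sum>q<l. g (p*l+q))"
proof -
  have "(\<Sum>r<k*l. g r) = (\<Sum>p<k. sum g {p * l..<p * l + l})"
    using sum.nat_group[of g l k] by (simp add: mult.commute)
  also have "\<dots> = (\<Sum>p<k. \<Sum>q<l. g (p*l+q))"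
  proof (rule sum.cong[OF refl])
    fix p
    have "sum g {p * l..<p * l + l} = sum (\<lambda>q. g (q + p*l)) {0..<l}"
      using sum.shift_bounds_nat_ivl[of g 0 "p*l" l] by (simp add: add.commute)
    then show "sum g {p * l..<p * l + l} = (\<Sum>q<l. g (p*l+q))"
      by (simp add: atLeast0LessThan add.commute)
  qed
  finally show ?thesis .
qed

lemma kron_mult:
  assumes A: "A \<in> carrier_mat a k" and B: "B \<in> carrier_mat k b"
    and C: "C \<in> carrier_mat c l" and D: "D \<in> carrier_mat l e"
    and pos: "c > 0" "e > 0" "l > 0"
  shows "kron_mat (A * B) (C * D) = kron_mat A C * kron_mat B D"
proof (rule eq_matI)
  show "dim_row (kron_mat (A * B) (C * D)) = dim_row (kron_mat A C * kron_mat B D)"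
    using A B C D by simp
  show "dim_col (kron_mat (A * B) (C * D)) = dim_col (kron_mat A C * kron_mat B D)"
    using A B C D by simp
  fix i j assume i: "i < dim_row (kron_mat A C * kron_mat B D)" and j: "j < dim_col (kron_mat A C * kron_mat B D)"
  from i j A B C D have i': "i < a * c" and j': "j < b * e" by auto
  have idc: "i div c < a" using i' pos by (simp add: less_mult_imp_div_less)
  have jde: "j div e < b" using j' pos by (simp add: less_mult_imp_div_less)
  have imc: "i mod c < c" "j mod e < e" using pos by auto
  have "kron_mat (A * B) (C * D) $$ (i,j) = (A*B) $$ (i div c, j div e) * (C*D) $$ (i mod c, j mod e)"
    using A B C D i' j' by (simp add: kron_mat_def)
  also have "\<dots> = (\<Sum>p<k. A $$ (i div c, p) * B $$ (p, j div e)) * (\<Sum>q<l. C $$ (i mod c, q) * D $$ (q, j mod e))"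
    using A B C D idc jde imc by (simp add: scalar_prod_def atLeast0LessThan)
  also have "\<dots> = (\<Sum>p<k. \<Sum>q<l. (A $$ (i div c, p) * C $$ (i mod c, q)) * (B $$ (p, j div e) * D $$ (q, j mod e)))"
    by (simp add: sum_product algebra_simps)
  also have "\<dots> = (\<Sum>r<k*l. kron_mat A C $$ (i, r) * kron_mat B D $$ (r, j))"
    unfolding sum_group_nat
  proof (intro sum.cong refl)
    fix p q assume p: "p \<in> {..<k}" and q: "q \<in> {..<l}"
    have "Suc p * l \<le> k * l" using p by (intro mult_le_mono1) simp
    then have r: "p*l+q < k*l" using q by simp
    have d: "(p*l+q) div l = p" "(p*l+q) mod l = q" using q pos by auto
    show "A $$ (i div c, p) * C $$ (i mod c, q) * (B $$ (p, j div e) * D $$ (q, j mod e)) =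
         kron_mat A C $$ (i, p * l + q) * kron_mat B D $$ (p * l + q, j)"
      using A B C D r d i' j' by (simp add: kron_mat_def)
  qed
  also have "\<dots> = (kron_mat A C * kron_mat B D) $$ (i,j)"
    using A B C D i' j' by (simp add: scalar_prod_def atLeast0LessThan)
  finally show "kron_mat (A * B) (C * D) $$ (i, j) = (kron_mat A C * kron_mat B D) $$ (i, j)" .
qed

lemma kron_one: "kron_mat (1\<^sub>m a) (1\<^sub>m b) = 1\<^sub>m (a*b)"
proof (rule eq_matI)
  fix i j assume "i < dim_row (1\<^sub>m (a * b))" "j < dim_col (1\<^sub>m (a * b))"
  then have i: "i < a*b" and j: "j < a*b" by auto
  then have b: "b > 0" by (cases b) auto
  have "(i div b = j div b \<and> i mod b = j mod b) = (i = j)"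
    by (metis div_mult_mod_eq)
  moreover have "i div b < a" "j div b < a" using i j b by (auto simp: less_mult_imp_div_less)
  ultimately show "kron_mat (1\<^sub>m a) (1\<^sub>m b) $$ (i, j) = 1\<^sub>m (a * b) $$ (i, j)"
    using i j b by (auto simp: kron_mat_def)
qed auto

lemma kron_upper:
  assumes "A \<in> carrier_mat a a" "B \<in> carrier_mat b b" "upper_triangular A" "upper_triangular B" "b > 0"
  shows "upper_triangular (kron_mat A B)"
  unfolding upper_triangular_def
proof (intro allI impI)
  fix i j assume i: "i < dim_row (kron_mat A B)" and ji: "j < i"
  then have i': "i < a*b" using assms by simp
  have le: "j div b \<le> i div b" using ji by (simp add: div_le_mono)
  show "kron_mat A B $$ (i, j) = 0"
  proof (cases "j div b < i div b")
    case True
    have "i div b < a" using i' assms by (simp add: less_mult_imp_div_less)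
    then have "A $$ (i div b, j div b) = 0" using True assms by auto
    then show ?thesis using i' ji assms by (simp add: kron_mat_def)
  next
    case False
    then have eq: "j div b = i div b" using le by simp
    then have "j mod b < i mod b" using ji
      by (metis div_mult_mod_eq nat_add_left_cancel_less)
    then have "B $$ (i mod b, j mod b) = 0" using assms by auto
    then show ?thesis using i' ji assms by (simp add: kron_mat_def)
  qed
qed

definition kr :: "'a::times list \<Rightarrow> 'a list \<Rightarrow> 'a list" where
  "kr xs ys = map (\<lambda>i. xs ! (i div length ys) * ys ! (i mod length ys)) [0..<length xs * length ys]"

lemma length_kr[simp]: "length (kr xs ys) = length xs * length ys"
  by (simp add: kr_def)

lemma kron_diag:
  assumes A: "A \<in> carrier_mat a a" and B: "B \<in> carrier_mat b b"
  shows "diag_mat (kron_mat A B) = kr (diag_mat A) (diag_mat B)"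
proof (rule nth_equalityI)
  show "length (diag_mat (kron_mat A B)) = length (kr (diag_mat A) (diag_mat B))"
    using A B by (simp add: diag_mat_def)
  fix i assume "i < length (diag_mat (kron_mat A B))"
  then have i: "i < a * b" using A B by (simp add: diag_mat_def)
  then have b: "b > 0" by (cases b) auto
  have ia: "i div b < a" using i b by (simp add: less_mult_imp_div_less)
  have ib: "i mod b < b" using b by simp
  have "diag_mat (kron_mat A B) ! i = kron_mat A B $$ (i,i)"
    using A B i by (simp add: diag_mat_def)
  also have "\<dots> = A $$ (i div b, i div b) * B $$ (i mod b, i mod b)"
    using kron_index[of i A B i] A B i by simp
  also have "\<dots> = kr (diag_mat A) (diag_mat B) ! i"
    using A B i ia ib by (simp add: kr_def diag_mat_def)
  finally show "diag_mat (kron_mat A B) ! i = kr (diag_mat A) (diag_mat B) ! i" .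
qed

lemma sum_list_kr: fixes g :: "'a::times \<Rightarrow> 'b::comm_monoid_add"
  shows "sum_list (map g (kr xs ys)) = sum_list (map (\<lambda>x. sum_list (map (\<lambda>y. g (x * y)) ys)) xs)"
proof -
  let ?b = "length ys"
  have "sum_list (map g (kr xs ys)) = (\<Sum>i<length xs * ?b. g (xs ! (i div ?b) * ys ! (i mod ?b)))"
    by (simp add: kr_def sum_list_sum_nth atLeast0LessThan)
  also have "\<dots> = (\<Sum>p<length xs. \<Sum>q<?b. g (xs ! ((p*?b+q) div ?b) * ys ! ((p*?b+q) mod ?b)))"
    by (rule sum_group_nat)
  also have "\<dots> = (\<Sum>p<length xs. \<Sum>q<?b. g (xs ! p * ys ! q))"
  proof (intro sum.cong refl)
    fix p q assume q: "q \<in> {..<?b}"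
    then have "?b > 0" by auto
    then have "(p*?b+q) div ?b = p" "(p*?b+q) mod ?b = q" using q by auto
    then show "g (xs ! ((p*?b+q) div ?b) * ys ! ((p*?b+q) mod ?b)) = g (xs ! p * ys ! q)" by simp
  qed
  also have "\<dots> = sum_list (map (\<lambda>x. sum_list (map (\<lambda>y. g (x * y)) ys)) xs)"
    by (simp add: sum_list_sum_nth atLeast0LessThan)
  finally show ?thesis .
qed

definition tri_form :: "complex mat \<Rightarrow> complex list \<Rightarrow> bool" where
  "tri_form M ds \<longleftrightarrow> length ds > 0 \<and> (\<exists>P Q T.
     M \<in> carrier_mat (length ds) (length ds) \<and> P \<in> carrier_mat (length ds) (length ds) \<and>
     Q \<in> carrier_mat (length ds) (length ds) \<and> T \<in> carrier_mat (length ds) (length ds) \<and>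
     P * Q = 1\<^sub>m (length ds) \<and> Q * P = 1\<^sub>m (length ds) \<and> M = P * T * Q \<and>
     upper_triangular T \<and> diag_mat T = ds)"

lemma sum_list_single_mset: "sum_list (map (\<lambda>a. {#a#}) xs) = mset xs"
  by (induction xs) auto

lemma tri_form_char_poly:
  assumes "tri_form M ds"
  shows "char_poly M = (\<Prod>a\<leftarrow>ds. [:- a, 1:])"
proof -
  from assms obtain P Q T where *: "M \<in> carrier_mat (length ds) (length ds)" "P \<in> carrier_mat (length ds) (length ds)"
     "Q \<in> carrier_mat (length ds) (length ds)" "T \<in> carrier_mat (length ds) (length ds)"
     "P * Q = 1\<^sub>m (length ds)" "Q * P = 1\<^sub>m (length ds)" "M = P * T * Q"
     "upper_triangular T" "diag_mat T = ds"
    unfolding tri_form_def by blast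
  have "similar_mat_wit M T P Q" using * unfolding similar_mat_wit_def Let_def by auto
  then have "similar_mat M T" unfolding similar_mat_def by blast
  then have "char_poly M = char_poly T" by (rule char_poly_similar)
  also have "\<dots> = (\<Prod>a\<leftarrow>diag_mat T. [:- a, 1:])" by (rule char_poly_upper_triangular[OF *(4) *(8)])
  finally show ?thesis using *(9) by simp
qed

lemma tri_form_eig:
  assumes "tri_form M ds"
  shows "eigvals_mset M = mset ds"
proof -
  have "eigvals_mset M = proots (\<Prod>a\<leftarrow>ds. [:- a, 1:])"
    unfolding eigvals_mset_def tri_form_char_poly[OF assms] ..
  also have "\<dots> = sum_list (map proots (map (\<lambda>a. [:- a, 1:]) ds))"
  proof -
    have "0 \<notin> set (map (\<lambda>a. [:- a, 1:]) ds)" by auto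
    from proots_prod_list[OF this] show ?thesis by (simp add: o_def)
  qed
  also have "\<dots> = sum_list (map (\<lambda>a. {#a#}) ds)"
    by (simp add: o_def)
  finally show ?thesis by (simp add: sum_list_single_mset)
qed

lemma tri_form_dim: "tri_form M ds \<Longrightarrow> M \<in> carrier_mat (length ds) (length ds)"
  unfolding tri_form_def by blast

lemma tri_form_shift:
  assumes "tri_form M ds"
  shows "tri_form (M - c \<cdot>\<^sub>m 1\<^sub>m (length ds)) (map (\<lambda>x. x - c) ds)"
proof -
  let ?d = "length ds"
  from assms obtain P Q T where *: "M \<in> carrier_mat ?d ?d" "P \<in> carrier_mat ?d ?d"
     "Q \<in> carrier_mat ?d ?d" "T \<in> carrier_mat ?d ?d"
     "P * Q = 1\<^sub>m ?d" "Q * P = 1\<^sub>m ?d" "M = P * T * Q"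
     "upper_triangular T" "diag_mat T = ds" and pos: "?d > 0"
    unfolding tri_form_def by blast
  define T' where "T' = T - c \<cdot>\<^sub>m 1\<^sub>m ?d"
  have T': "T' \<in> carrier_mat ?d ?d" using *(4) unfolding T'_def carrier_mat_def by auto
  have ut: "upper_triangular T'"
    using *(4,8) unfolding upper_triangular_def T'_def by auto
  have "diag_mat T' = map (\<lambda>i. T $$ (i,i) - c) [0..<?d]"
    using *(4) unfolding T'_def diag_mat_def by (auto intro!: map_cong)
  also have "\<dots> = map (\<lambda>x. x - c) (diag_mat T)"
    using *(4) unfolding diag_mat_def by simp
  finally have dg: "diag_mat T' = map (\<lambda>x. x - c) ds" using *(9) by simp
  have "P * T' * Q = P * T * Q - c \<cdot>\<^sub>m (P * Q)"
  proof -
    have "P * T' = P * T - c \<cdot>\<^sub>m P"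
      unfolding T'_def using *(2,4) mult_smult_distrib[OF *(2) one_carrier_mat[of ?d], of c]
      by (simp add: mult_minus_distrib_mat)
    then have "P * T' * Q = (P * T - c \<cdot>\<^sub>m P) * Q" by simp
    also have "\<dots> = P * T * Q - (c \<cdot>\<^sub>m P) * Q"
      using *(2,3,4) by (intro minus_mult_distrib_mat) auto
    also have "(c \<cdot>\<^sub>m P) * Q = c \<cdot>\<^sub>m (P * Q)"
      by (rule mult_smult_assoc_mat[OF *(2,3)])
    finally show ?thesis .
  qed
  then have M': "M - c \<cdot>\<^sub>m 1\<^sub>m ?d = P * T' * Q" using *(5,7) by simp
  have Mc: "M - c \<cdot>\<^sub>m 1\<^sub>m ?d \<in> carrier_mat ?d ?d" using *(1) unfolding carrier_mat_def by auto
  show ?thesis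
    unfolding tri_form_def length_map using *(2-6) T' ut dg pos M' Mc by blast
qed

lemma tri_form_one: "tri_form (1\<^sub>m 1) [1]"
  unfolding tri_form_def
  by (intro conjI exI[of _ "1\<^sub>m 1"]) (auto simp: upper_triangular_def diag_mat_def)

lemma tri_form_kron:
  assumes A: "tri_form A as" and B: "tri_form B bs"
  shows "tri_form (kron_mat A B) (kr as bs)"
proof -
  let ?a = "length as" and ?b = "length bs"
  from A obtain P1 Q1 T1 where a: "A \<in> carrier_mat ?a ?a" "P1 \<in> carrier_mat ?a ?a"
     "Q1 \<in> carrier_mat ?a ?a" "T1 \<in> carrier_mat ?a ?a"
     "P1 * Q1 = 1\<^sub>m ?a" "Q1 * P1 = 1\<^sub>m ?a" "A = P1 * T1 * Q1"
     "upper_triangular T1" "diag_mat T1 = as" and apos: "?a > 0"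
    unfolding tri_form_def by blast
  from B obtain P2 Q2 T2 where b: "B \<in> carrier_mat ?b ?b" "P2 \<in> carrier_mat ?b ?b"
     "Q2 \<in> carrier_mat ?b ?b" "T2 \<in> carrier_mat ?b ?b"
     "P2 * Q2 = 1\<^sub>m ?b" "Q2 * P2 = 1\<^sub>m ?b" "B = P2 * T2 * Q2"
     "upper_triangular T2" "diag_mat T2 = bs" and bpos: "?b > 0"
    unfolding tri_form_def by blast
  let ?ds = "kr as bs"
  have dg: "diag_mat (kron_mat T1 T2) = ?ds"
    using kron_diag[OF a(4) b(4)] a(9) b(9) by simp
  have len: "length ?ds = ?a * ?b"
    by simp
  have ut: "upper_triangular (kron_mat T1 T2)"
    by (rule kron_upper[OF a(4) b(4) a(8) b(8) bpos])
  have PQ: "kron_mat P1 P2 * kron_mat Q1 Q2 = 1\<^sub>m (?a * ?b)"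
    using kron_mult[OF a(2) a(3) b(2) b(3) bpos bpos bpos, symmetric] a(5) b(5) by (simp add: kron_one)
  have QP: "kron_mat Q1 Q2 * kron_mat P1 P2 = 1\<^sub>m (?a * ?b)"
    using kron_mult[OF a(3) a(2) b(3) b(2) bpos bpos bpos, symmetric] a(6) b(6) by (simp add: kron_one)
  have "kron_mat A B = kron_mat (P1 * T1) (P2 * T2) * kron_mat Q1 Q2"
    unfolding a(7) b(7)
    by (rule kron_mult) (use a b bpos in auto)
  also have "kron_mat (P1 * T1) (P2 * T2) = kron_mat P1 P2 * kron_mat T1 T2"
    by (rule kron_mult) (use a b bpos in auto)
  finally have M: "kron_mat A B = kron_mat P1 P2 * kron_mat T1 T2 * kron_mat Q1 Q2" .
  show ?thesis
    unfolding tri_form_def len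
    apply (rule conjI)
    using apos bpos apply simp
    apply (rule exI[of _ "kron_mat P1 P2"], rule exI[of _ "kron_mat Q1 Q2"], rule exI[of _ "kron_mat T1 T2"])
    using a b apos bpos PQ QP M ut dg by auto
qed


lemma density_tri:
  assumes dm: "density_matrix N \<rho>" and N: "N > 0"
  shows "\<exists>ds. tri_form \<rho> ds \<and> length ds = N"
proof -
  have C: "\<rho> \<in> carrier_mat N N" using dm unfolding density_matrix_def by blast
  obtain as where cp: "char_poly \<rho> = (\<Prod>a\<leftarrow>as. [:- a, 1:])" and len: "length as = N"
    using char_poly_factorized[OF C] by blast
  obtain B P Q where sd: "schur_decomposition \<rho> as = (B,P,Q)" by (cases "schur_decomposition \<rho> as") auto
  from schur_decomposition[OF C cp sd]
  have sim: "similar_mat_wit \<rho> B P Q" and ut: "upper_triangular B" and dg: "diag_mat B = as" by auto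
  note w = similar_mat_witD2[OF C sim]
  have "tri_form \<rho> as"
    unfolding tri_form_def len using N w ut dg by blast
  then show ?thesis using len by blast
qed

lemma cnj_mult_self: "cnj z * z = complex_of_real ((cmod z)\<^sup>2)"
  by (metis complex_norm_square mult.commute)

lemma tri_eigen_real:
  assumes dm: "density_matrix N \<rho>" and tf: "tri_form \<rho> ds" and d: "d \<in> set ds"
  shows "Im d = 0 \<and> Re d \<ge> 0"
proof -
  have C: "\<rho> \<in> carrier_mat N N" using dm unfolding density_matrix_def by blast
  have "poly (char_poly \<rho>) d = 0"
    unfolding tri_form_char_poly[OF tf] by (rule linear_poly_root[OF d])
  then have "eigenvalue \<rho> d" using eigenvalue_root_char_poly[OF C] by simp
  then obtain v where ev: "eigenvector \<rho> v d" unfolding eigenvalue_def by blast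
  then have v: "v \<in> carrier_vec N" "v \<noteq> 0\<^sub>v N" "\<rho> *\<^sub>v v = d \<cdot>\<^sub>v v"
    using C unfolding eigenvector_def by auto
  define q where "q = (\<Sum>i<N. \<Sum>j<N. cnj (v $ i) * \<rho> $$ (i,j) * v $ j)"
  from dm v(1) have q: "Im q = 0 \<and> Re q \<ge> 0"
    unfolding density_matrix_def q_def Let_def by blast
  define s where "s = (\<Sum>i<N. (cmod (v $ i))\<^sup>2)"
  have "q = (\<Sum>i<N. cnj (v $ i) * (\<rho> *\<^sub>v v) $ i)"
    unfolding q_def
  proof (rule sum.cong[OF refl])
    fix i assume i: "i \<in> {..<N}"
    have "(\<rho> *\<^sub>v v) $ i = (\<Sum>j<N. \<rho> $$ (i,j) * v $ j)"
      using C v(1) i by (simp add: scalar_prod_def atLeast0LessThan)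
    then show "(\<Sum>j<N. cnj (v $ i) * \<rho> $$ (i, j) * v $ j) = cnj (v $ i) * (\<rho> *\<^sub>v v) $ i"
      by (simp add: sum_distrib_left mult.assoc)
  qed
  also have "\<dots> = (\<Sum>i<N. d * (cnj (v $ i) * v $ i))"
    using v(1,3) by (intro sum.cong refl) (simp add: mult.left_commute)
  also have "\<dots> = d * complex_of_real s"
    unfolding s_def by (simp add: sum_distrib_left cnj_mult_self)
  finally have qs: "q = d * complex_of_real s" .
  have "s > 0"
  proof -
    obtain i where i: "i < N" "v $ i \<noteq> 0"
      using v(1,2) by (metis eq_vecI carrier_vecD index_zero_vec(1) index_zero_vec(2))
    have "(cmod (v $ i))\<^sup>2 > 0" using i by simp
    moreover have "(cmod (v $ i))\<^sup>2 \<le> s"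
      unfolding s_def using i by (intro member_le_sum) auto
    ultimately show ?thesis by linarith
  qed
  moreover have "Im q = Im d * s" "Re q = Re d * s" using qs by simp_all
  ultimately show ?thesis using q by (simp add: zero_le_mult_iff)
qed

lemma tri_trace:
  assumes tf: "tri_form \<rho> ds"
  shows "(\<Sum>i<length ds. \<rho> $$ (i,i)) = sum_list ds"
proof -
  let ?d = "length ds"
  from tf obtain P Q T where *: "\<rho> \<in> carrier_mat ?d ?d" "P \<in> carrier_mat ?d ?d"
     "Q \<in> carrier_mat ?d ?d" "T \<in> carrier_mat ?d ?d"
     "P * Q = 1\<^sub>m ?d" "Q * P = 1\<^sub>m ?d" "\<rho> = P * T * Q"
     "upper_triangular T" "diag_mat T = ds"
    unfolding tri_form_def by blast
  have e: "\<rho> $$ (i,i) = (\<Sum>k<?d. \<Sum>l<?d. P $$ (i,k) * T $$ (k,l) * Q $$ (l,i))" if i: "i < ?d" for i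
    using * i by (simp add: scalar_prod_def atLeast0LessThan sum_distrib_left mult.assoc)
  have QP: "(\<Sum>i<?d. Q $$ (l,i) * P $$ (i,k)) = (if l = k then 1 else 0)" if "l < ?d" "k < ?d" for l k
  proof -
    have "(\<Sum>i<?d. Q $$ (l,i) * P $$ (i,k)) = (Q * P) $$ (l,k)"
      using *(2,3) that by (simp add: scalar_prod_def atLeast0LessThan)
    also have "\<dots> = (if l = k then 1 else 0)"
      unfolding *(6) using that by simp
    finally show ?thesis .
  qed
  have "(\<Sum>i<?d. \<rho> $$ (i,i)) = (\<Sum>i<?d. \<Sum>k<?d. \<Sum>l<?d. P $$ (i,k) * T $$ (k,l) * Q $$ (l,i))"
    by (rule sum.cong[OF refl]) (use e in simp)
  also have "\<dots> = (\<Sum>k<?d. \<Sum>i<?d. \<Sum>l<?d. P $$ (i,k) * T $$ (k,l) * Q $$ (l,i))"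
    by (rule sum.swap)
  also have "\<dots> = (\<Sum>k<?d. \<Sum>l<?d. \<Sum>i<?d. P $$ (i,k) * T $$ (k,l) * Q $$ (l,i))"
    by (rule sum.cong[OF refl], rule sum.swap)
  also have "\<dots> = (\<Sum>k<?d. \<Sum>l<?d. T $$ (k,l) * (\<Sum>i<?d. Q $$ (l,i) * P $$ (i,k)))"
    unfolding sum_distrib_left by (rule sum.cong[OF refl], rule sum.cong[OF refl], rule sum.cong[OF refl]) (simp only: ac_simps)
  also have "\<dots> = (\<Sum>k<?d. \<Sum>l<?d. if l = k then T $$ (k,l) else 0)"
    by (rule sum.cong[OF refl], rule sum.cong[OF refl]) (simp add: QP)
  also have "\<dots> = (\<Sum>l<?d. T $$ (l,l))"
    by (rule sum.cong[OF refl]) (simp add: sum.delta)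
  also have "\<dots> = sum_list ds"
  proof -
    have dT: "dim_row T = ?d" using *(4) by blast
    have "sum_list (diag_mat T) = (\<Sum>l<dim_row T. T $$ (l,l))"
      by (simp add: diag_mat_def sum_list_sum_nth atLeast0LessThan)
    then show ?thesis unfolding dT *(9) by simp
  qed
  finally show ?thesis .
qed

fun pw :: "'a::monoid_mult list \<Rightarrow> nat \<Rightarrow> 'a list" where
  "pw xs 0 = [1]"
| "pw xs (Suc n) = kr (pw xs n) xs"

lemma tri_form_pow: "tri_form \<rho> ds \<Longrightarrow> tri_form (tensor_pow \<rho> n) (pw ds n)"
proof (induction n)
  case 0
  then show ?case using tri_form_one by simp
next
  case (Suc n)
  then show ?case by (simp add: tri_form_kron)
qed

lemma length_pw: "length (pw xs n) = length xs ^ n"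
  by (induction n) auto

lemma kr_of_real: "kr (map complex_of_real xs) (map complex_of_real ys) = map complex_of_real (kr xs ys)"
  unfolding kr_def length_map map_map o_def
proof (rule map_cong[OF refl])
  fix x assume "x \<in> set [0..<length xs * length ys]"
  then have x: "x < length xs * length ys" by simp
  then have b: "length ys > 0" by (cases "length ys") auto
  have "x div length ys < length xs" using x b by (simp add: less_mult_imp_div_less)
  moreover have "x mod length ys < length ys" using b by simp
  ultimately show "map complex_of_real xs ! (x div length ys) * map complex_of_real ys ! (x mod length ys) =
     complex_of_real (xs ! (x div length ys) * ys ! (x mod length ys))" by simp
qed

lemma pw_of_real: "pw (map complex_of_real xs) n = map complex_of_real (pw xs n)"
  by (induction n) (auto simp: kr_of_real)


lemma set_kr: "z \<in> set (kr xs ys) \<Longrightarrow> \<exists>x\<in>set xs. \<exists>y\<in>set ys. z = x * y"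
proof -
  assume "z \<in> set (kr xs ys)"
  then obtain i where i: "i < length xs * length ys" and z: "z = xs ! (i div length ys) * ys ! (i mod length ys)"
    unfolding kr_def by auto
  then have b: "length ys > 0" by (cases "length ys") auto
  have "i div length ys < length xs" using i b by (simp add: less_mult_imp_div_less)
  moreover have "i mod length ys < length ys" using b by simp
  ultimately show ?thesis using z nth_mem by blast
qed

lemma sum_list_kr_id: "sum_list (kr xs ys) = sum_list xs * (sum_list ys :: real)"
proof -
  have "sum_list (kr xs ys) = sum_list (map (\<lambda>x. x) (kr xs ys))" by simp
  also have "\<dots> = sum_list (map (\<lambda>x. sum_list (map (\<lambda>y. x * y) ys)) xs)"
    by (rule sum_list_kr)
  also have "\<dots> = sum_list (map (\<lambda>x. x * sum_list ys) xs)"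
    by (simp add: sum_list_const_mult)
  also have "\<dots> = sum_list xs * sum_list ys"
    by (simp add: sum_list_mult_const)
  finally show ?thesis .
qed

lemma pw_nonneg: "(\<forall>x\<in>set rs. x \<ge> (0::real)) \<Longrightarrow> z \<in> set (pw rs n) \<Longrightarrow> z \<ge> 0"
proof (induction n arbitrary: z)
  case 0 then show ?case by simp
next
  case (Suc n)
  then obtain x y where "x \<in> set (pw rs n)" "y \<in> set rs" "z = x * y" using set_kr by fastforce
  then show ?case using Suc by simp
qed

lemma pw_sum: "sum_list rs = (1::real) \<Longrightarrow> sum_list (pw rs n) = 1"
  by (induction n) (auto simp: sum_list_kr_id)

lemma entr_mult: "a \<ge> 0 \<Longrightarrow> b \<ge> 0 \<Longrightarrow> entr (a * b) = a * entr b + b * entr a"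
  unfolding entr_def by (auto simp: log_mult algebra_simps)

lemma pw_entr:
  assumes nn: "\<forall>x\<in>set rs. x \<ge> (0::real)" and s: "sum_list rs = 1"
  shows "sum_list (map entr (pw rs n)) = real n * sum_list (map entr rs)"
proof (induction n)
  case 0 then show ?case by (simp add: entr_def)
next
  case (Suc n)
  let ?X = "pw rs n"
  have "sum_list (map entr (pw rs (Suc n))) = sum_list (map (\<lambda>x. sum_list (map (\<lambda>y. entr (x * y)) rs)) ?X)"
    by (simp add: sum_list_kr)
  also have "\<dots> = sum_list (map (\<lambda>x. sum_list (map (\<lambda>y. x * entr y + y * entr x) rs)) ?X)"
    by (intro arg_cong[where f=sum_list] map_cong refl entr_mult)
       (use nn pw_nonneg[OF nn] in auto)
  also have "\<dots> = sum_list (map (\<lambda>x. x * sum_list (map entr rs) + entr x) ?X)"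
    by (simp add: sum_list_addf sum_list_const_mult sum_list_mult_const s)
  also have "\<dots> = sum_list ?X * sum_list (map entr rs) + sum_list (map entr ?X)"
    by (simp add: sum_list_addf sum_list_mult_const)
  also have "\<dots> = real (Suc n) * sum_list (map entr rs)"
    using Suc pw_sum[OF s, of n] by (simp add: algebra_simps)
  finally show ?case .
qed

lemma pw_dist:
  assumes nn: "\<forall>x\<in>set rs. x \<ge> (0::real)" and s: "sum_list rs = 1" and c: "real (length rs) * c = 1"
    and c0: "c \<ge> 0"
  shows "sum_list (map (\<lambda>x. \<bar>x - c ^ n\<bar>) (pw rs n)) \<le> real n * sum_list (map (\<lambda>y. \<bar>y - c\<bar>) rs)"
proof (induction n)
  case 0 then show ?case by simp
next
  case (Suc n)
  let ?X = "pw rs n" and ?D = "sum_list (map (\<lambda>y. \<bar>y - c\<bar>) rs)"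
  have "sum_list (map (\<lambda>x. \<bar>x - c ^ Suc n\<bar>) (pw rs (Suc n)))
      = sum_list (map (\<lambda>x. sum_list (map (\<lambda>y. \<bar>x * y - c ^ Suc n\<bar>) rs)) ?X)"
    by (simp add: sum_list_kr)
  also have "\<dots> \<le> sum_list (map (\<lambda>x. sum_list (map (\<lambda>y. x * \<bar>y - c\<bar> + c * \<bar>x - c ^ n\<bar>) rs)) ?X)"
  proof (rule sum_list_mono)
    fix x assume x: "x \<in> set ?X"
    then have x0: "x \<ge> 0" using pw_nonneg[OF nn] by blast
    show "sum_list (map (\<lambda>y. \<bar>x * y - c ^ Suc n\<bar>) rs) \<le> sum_list (map (\<lambda>y. x * \<bar>y - c\<bar> + c * \<bar>x - c ^ n\<bar>) rs)"
    proof (rule sum_list_mono)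
      fix y assume "y \<in> set rs"
      have "\<bar>x * y - c ^ Suc n\<bar> = \<bar>x * (y - c) + c * (x - c ^ n)\<bar>"
        by (simp add: algebra_simps)
      also have "\<dots> \<le> \<bar>x * (y - c)\<bar> + \<bar>c * (x - c ^ n)\<bar>" by (rule abs_triangle_ineq)
      also have "\<dots> = x * \<bar>y - c\<bar> + c * \<bar>x - c ^ n\<bar>" using x0 c0 by (simp add: abs_mult)
      finally show "\<bar>x * y - c ^ Suc n\<bar> \<le> x * \<bar>y - c\<bar> + c * \<bar>x - c ^ n\<bar>" .
    qed
  qed
  also have "\<dots> = sum_list (map (\<lambda>x. x * ?D + \<bar>x - c ^ n\<bar>) ?X)"
  proof -
    have "\<And>x. sum_list (map (\<lambda>y. x * \<bar>y - c\<bar> + c * \<bar>x - c ^ n\<bar>) rs) = x * ?D + \<bar>x - c ^ n\<bar>"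
      using c by (simp add: sum_list_addf sum_list_const_mult sum_list_triv algebra_simps)
    then show ?thesis by simp
  qed
  also have "\<dots> = sum_list ?X * ?D + sum_list (map (\<lambda>x. \<bar>x - c ^ n\<bar>) ?X)"
    by (simp add: sum_list_addf sum_list_mult_const)
  also have "\<dots> \<le> ?D + real n * ?D"
    using Suc pw_sum[OF s, of n] by simp
  also have "\<dots> = real (Suc n) * ?D" by (simp add: algebra_simps)
  finally show ?case .
qed


lemma sum_mset_image_list: "sum_mset (image_mset f (mset ys)) = sum_list (map f ys)"
  by (induction ys) auto

lemma vn_ent_real: "tri_form M (map complex_of_real xs) \<Longrightarrow> vn_entropy M = - sum_list (map entr xs)"
  unfolding vn_entropy_def tri_form_eig sum_mset_image_list by (simp add: o_def)

lemma td_real: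
  assumes "tri_form M (map complex_of_real xs)"
  shows "trace_dist M (max_mixed (length xs)) = 1/2 * sum_list (map (\<lambda>x. \<bar>x - 1 / real (length xs)\<bar>) xs)"
proof -
  let ?c = "1 / (of_nat (length xs) :: complex)"
  have "tri_form (M - ?c \<cdot>\<^sub>m 1\<^sub>m (length xs)) (map (\<lambda>x. x - ?c) (map complex_of_real xs))"
    using tri_form_shift[OF assms, of ?c] by simp
  then have e: "eigvals_mset (M - max_mixed (length xs)) = mset (map (\<lambda>x. x - ?c) (map complex_of_real xs))"
    unfolding max_mixed_def by (rule tri_form_eig)
  have r: "\<And>x. Re (complex_of_real x - ?c) = x - 1 / real (length xs)"
    by simp
  show ?thesis
    unfolding trace_dist_def e sum_mset_image_list map_map o_def r ..
qed

lemma entr_nonpos: "0 \<le> x \<Longrightarrow> x \<le> 1 \<Longrightarrow> entr x \<le> 0"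
  unfolding entr_def by (auto simp: mult_nonneg_nonpos)

theorem mainTheorem3:
  fixes N n :: nat and \<rho> :: "complex mat"
  assumes "N \<ge> 2" and "density_matrix N \<rho>" and "n \<ge> 1"
  shows "qscm (tensor_pow \<rho> n) \<le> real n * qscm \<rho>"
proof -
  have N0: "N > 0" using assms(1) by simp
  obtain ds where tf: "tri_form \<rho> ds" and lds: "length ds = N"
    using density_tri[OF assms(2) N0] by blast
  have re: "Im d = 0 \<and> Re d \<ge> 0" if "d \<in> set ds" for d
    using tri_eigen_real[OF assms(2) tf that] .
  define rs where "rs = map Re ds"
  have dsr: "ds = map complex_of_real rs"
    unfolding rs_def map_map o_def by (rule sym, rule map_idI) (use re in \<open>auto intro: complex_eqI\<close>)
  have lrs: "length rs = N" using lds rs_def by simp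
  have nn: "\<forall>x\<in>set rs. x \<ge> 0" using re rs_def by auto
  have "(\<Sum>i<N. \<rho> $$ (i,i)) = 1" using assms(2) unfolding density_matrix_def by blast
  then have "sum_list ds = 1" using tri_trace[OF tf] lds by simp
  then have s: "sum_list rs = 1" unfolding dsr
  proof -
    have "sum_list (map complex_of_real rs) = complex_of_real (sum_list rs)"
      by (induction rs) auto
    then show "sum_list (map complex_of_real rs) = 1 \<Longrightarrow> sum_list rs = 1"
      by (metis Re_complex_of_real one_complex.sel(1))
  qed
  have tf1: "tri_form \<rho> (map complex_of_real rs)" using tf dsr by simp
  have tfn: "tri_form (tensor_pow \<rho> n) (map complex_of_real (pw rs n))"
    using tri_form_pow[OF tf1, of n] by (simp add: pw_of_real)
  have dimn: "dim_row (tensor_pow \<rho> n) = N ^ n"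
    using tri_form_dim[OF tfn] by (simp add: length_pw lrs)
  have dim1: "dim_row \<rho> = N"
    using tri_form_dim[OF tf1] by (simp add: lrs)
  define E where "E = sum_list (map entr rs)"
  define D where "D = sum_list (map (\<lambda>y. \<bar>y - 1 / real N\<bar>) rs)"
  define Dn where "Dn = sum_list (map (\<lambda>x. \<bar>x - (1 / real N) ^ n\<bar>) (pw rs n))"
  have Sn: "vn_entropy (tensor_pow \<rho> n) = - (real n * E)"
    using vn_ent_real[OF tfn] pw_entr[OF nn s, of n] E_def by simp
  have S1: "vn_entropy \<rho> = - E" using vn_ent_real[OF tf1] E_def by simp
  have Tn: "trace_dist (tensor_pow \<rho> n) (max_mixed (N ^ n)) = 1/2 * Dn"
    using td_real[OF tfn] by (simp add: length_pw lrs Dn_def power_one_over)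
  have T1: "trace_dist \<rho> (max_mixed N) = 1/2 * D"
    using td_real[OF tf1] by (simp add: lrs D_def)
  have DnD: "Dn \<le> real n * D"
    unfolding Dn_def D_def
    by (rule pw_dist[OF nn s]) (use lrs N0 in simp_all)
  have E0: "E \<le> 0"
    unfolding E_def
  proof (rule sum_list_nonpos)
    fix x assume "x \<in> set (map entr rs)"
    then obtain y where y: "y \<in> set rs" "x = entr y" by auto
    have "y \<le> sum_list rs" using y(1) nn by (intro member_le_sum_list) auto
    then show "x \<le> 0" using y nn s by (auto intro: entr_nonpos)
  qed
  have L: "log 2 (real N) > 0" using assms(1) by simp
  have Ln: "log 2 (real (N ^ n)) = real n * log 2 (real N)"
    by (simp add: log_nat_power)
  have n0: "real n > 0" using assms(3) by simp
  have "qscm (tensor_pow \<rho> n) = (1 / (real n * log 2 (real N))) * (- (real n * E)) * (1/2 * Dn)"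
    unfolding qscm_def dimn Sn Tn Ln ..
  also have "\<dots> = (- E) / log 2 (real N) * (1/2 * Dn)"
    using n0 by (simp add: field_simps)
  also have "\<dots> \<le> (- E) / log 2 (real N) * (1/2 * (real n * D))"
    using DnD E0 L by (intro mult_left_mono) (simp_all add: divide_nonpos_pos)
  also have "\<dots> = real n * ((1 / log 2 (real N)) * (- E) * (1/2 * D))"
    by (simp add: field_simps)
  also have "\<dots> = real n * qscm \<rho>"
    unfolding qscm_def dim1 S1 T1 ..
  finally show ?thesis .
qed

end
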